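(* Let $p$ be a prime and let $\tau:\mathbb Z_p\to \mathbb Z/p[\![x]\!]^\times$ be the continuous homomorphism from the additive group of $p$-adic integers sending $\alpha$ to $(1-x)^\alpha$ (so $1\mapsto 1-x$). Let $K$ be the subfield of the field of formal Laurent series $\mathbb Z/p(\!(x)\!)$ generated by the image of $\tau$. Then the degree $[\mathbb Z/p(\!(x)\!):K]$ is uncountable.
   Context: In the paper $\mathbb Z_p$ is written multiplicatively as $C\otimes\mathbb Z_p=\{t^\alpha:\alpha\in\mathbb Z_p\}$ with $C=\langle t\rangle$ infinite cyclic, and $\tau(t^\alpha)=(1-x)^\alpha$; the homomorphism is well defined and continuous because $(1-x)^{p^i}=1-x^{p^i}$ in characteristic $p$. *)

theory Defs
  imports "HOL-Computational_Algebra.Formal_Laurent_Series" "HOL-Library.Cardinality" "HOL-Library.Countable_Set"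
begin

text \<open>p-adic integers, represented as compatible sequences of residues:
  alpha = (a_k)_k with a_k in [0, p^k) and a_(k+1) = a_k mod p^k
  (the inverse limit of Z/p^k).\<close>
definition padic_int :: "nat \<Rightarrow> (nat \<Rightarrow> nat) set" where
  "padic_int p = {a. \<forall>k. a k < p ^ k \<and> a (Suc k) mod p ^ k = a k}"

text \<open>tau(alpha) = (1 - x)^alpha = lim_k (1 - x)^(a_k) (x-adic limit).
  Since p^(n+1) > n, the n-th coefficient is already determined by (1-x)^(a_(n+1))
  (in characteristic p, (1-x)^(p^k) = 1 - x^(p^k)).\<close>
definition tau :: "(nat \<Rightarrow> nat) \<Rightarrow> 'a::comm_ring_1 fls" where
  "tau a = fps_to_fls (Abs_fps (\<lambda>n. fps_nth ((1 - fps_X) ^ (a (Suc n))) n))"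

definition is_subfield :: "'a::field set \<Rightarrow> bool" where
  "is_subfield F \<longleftrightarrow> 0 \<in> F \<and> 1 \<in> F \<and>
     (\<forall>x\<in>F. \<forall>y\<in>F. x + y \<in> F \<and> x * y \<in> F) \<and>
     (\<forall>x\<in>F. - x \<in> F \<and> inverse x \<in> F)"

definition subfield_generated :: "'a::field set \<Rightarrow> 'a set" where
  "subfield_generated S = \<Inter> {F. S \<subseteq> F \<and> is_subfield F}"

definition lin_indep_over :: "'a::field set \<Rightarrow> 'a set \<Rightarrow> bool" where
  "lin_indep_over K B \<longleftrightarrow>
     (\<forall>F c. finite F \<and> F \<subseteq> B \<and> (\<forall>v\<in>F. c v \<in> K) \<and> (\<Sum>v\<in>F. c v * v) = 0
        \<longrightarrow> (\<forall>v\<in>F. c v = 0))"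

definition spans_over :: "'a::field set \<Rightarrow> 'a set \<Rightarrow> bool" where
  "spans_over K B \<longleftrightarrow>
     (\<forall>y. \<exists>F c. finite F \<and> F \<subseteq> B \<and> (\<forall>v\<in>F. c v \<in> K) \<and> y = (\<Sum>v\<in>F. c v * v))"

definition basis_over :: "'a::field set \<Rightarrow> 'a set \<Rightarrow> bool" where
  "basis_over K B \<longleftrightarrow> lin_indep_over K B \<and> spans_over K B"

end

theory Submission imports Defs "HOL-Number_Theory.Residues" "HOL-Computational_Algebra.Primes" "HOL-Real_Asymp.Real_Asymp"
begin

lemma char_eq:
  assumes "prime p" "CARD('a::field) = p"
  shows "CHAR('a) = p"
proof -
  have "CHAR('a) dvd p" using CHAR_dvd_CARD[where 'a='a] assms by simp
  moreover have "CHAR('a) \<noteq> 1" by simp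
  ultimately show ?thesis using assms(1) by (metis One_nat_def prime_nat_iff)
qed

lemma frob_pow:
  assumes "prime CHAR('a::comm_ring_1)"
  shows "(1 - fps_X :: 'a fps) ^ (CHAR('a)^k) = 1 - fps_X ^ (CHAR('a)^k)"
proof -
  have "((1 - fps_X) + fps_X :: 'a fps) ^ (CHAR('a)^k) = (1 - fps_X) ^ (CHAR('a)^k) + fps_X ^ (CHAR('a)^k)"
    by (rule freshmans_dream') (use assms in auto)
  then show ?thesis by (simp add: algebra_simps)
qed

definition agr :: "nat \<Rightarrow> 'a::comm_ring_1 fps \<Rightarrow> 'a fps \<Rightarrow> bool" where
  "agr N f g \<longleftrightarrow> (\<forall>i<N. f$i = g$i)"

lemma agr_refl[simp]: "agr N f f" by (simp add: agr_def)
lemma agr_sym: "agr N f g \<Longrightarrow> agr N g f" by (simp add: agr_def)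
lemma agr_trans: "agr N f g \<Longrightarrow> agr N g h \<Longrightarrow> agr N f h" by (simp add: agr_def)
lemma agr_add: "agr N f f' \<Longrightarrow> agr N g g' \<Longrightarrow> agr N (f+g) (f'+g')" by (simp add: agr_def)
lemma agr_uminus: "agr N f f' \<Longrightarrow> agr N (-f) (-f')" by (simp add: agr_def)
lemma agr_mult: "agr N f f' \<Longrightarrow> agr N g g' \<Longrightarrow> agr N (f*g) (f'*g')"
  unfolding agr_def fps_mult_nth by (auto intro!: sum.cong)
lemma agr_power: "agr N f f' \<Longrightarrow> agr N (f^n) (f'^n)"
  by (induction n) (auto intro: agr_mult)

lemma pow_congr:
  assumes "prime CHAR('a::comm_ring_1)" "a mod CHAR('a)^m = b mod CHAR('a)^m"
  shows "agr (CHAR('a)^m) ((1 - fps_X :: 'a fps)^a) ((1 - fps_X)^b)"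
proof -
  let ?q = "CHAR('a)^m"
  have key: "agr ?q ((1 - fps_X :: 'a fps)^c) ((1 - fps_X)^(c mod ?q))" for c
  proof -
    have "(1 - fps_X :: 'a fps)^c = ((1 - fps_X)^?q)^(c div ?q) * (1 - fps_X)^(c mod ?q)"
      by (simp flip: power_mult power_add)
    also have "\<dots> = (1 - fps_X^?q)^(c div ?q) * (1 - fps_X)^(c mod ?q)"
      using frob_pow[OF assms(1)] by simp
    finally have eq: "(1 - fps_X :: 'a fps)^c = (1 - fps_X^?q)^(c div ?q) * (1 - fps_X)^(c mod ?q)" .
    have "agr ?q (1 - fps_X^?q :: 'a fps) 1"
      by (auto simp: agr_def fps_X_power_iff)
    then have "agr ?q ((1 - fps_X^?q :: 'a fps)^(c div ?q)) (1^(c div ?q))"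
      by (rule agr_power)
    then have "agr ?q ((1 - fps_X^?q :: 'a fps)^(c div ?q) * (1 - fps_X)^(c mod ?q)) (1 * (1 - fps_X)^(c mod ?q))"
      by (intro agr_mult) auto
    then show ?thesis using eq by (metis mult_1_left)
  qed
  show ?thesis using key[of a] key[of b] assms(2) by (metis agr_sym agr_trans)
qed

lemma padic_mod:
  assumes "\<alpha> \<in> padic_int p" "i \<le> j"
  shows "\<alpha> j mod p^i = \<alpha> i"
  using assms(2)
proof (induction j)
  case 0
  have "\<alpha> 0 < p^0" using assms(1) unfolding padic_int_def by blast
  with 0 show ?case by simp
next
  case (Suc j)
  show ?case
  proof (cases "i = Suc j")
    case True
    have "\<alpha> (Suc j) < p^(Suc j)" using assms(1) unfolding padic_int_def by blast
    with True show ?thesis by simp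
  next
    case False
    then have "i \<le> j" using Suc.prems by simp
    have "\<alpha> (Suc j) mod p^i = (\<alpha> (Suc j) mod p^j) mod p^i"
      using \<open>i \<le> j\<close> by (simp add: mod_mod_cancel le_imp_power_dvd)
    also have "\<dots> = \<alpha> j mod p^i" using assms(1) by (simp add: padic_int_def)
    finally show ?thesis using Suc.IH \<open>i \<le> j\<close> by simp
  qed
qed

definition Tf :: "(nat \<Rightarrow> nat) \<Rightarrow> 'a::comm_ring_1 fps" where
  "Tf a = Abs_fps (\<lambda>n. fps_nth ((1 - fps_X) ^ (a (Suc n))) n)"

lemma tau_Tf: "tau a = fps_to_fls (Tf a)"
  by (simp add: tau_def Tf_def)

lemma Tf_agr:
  assumes "prime CHAR('a::comm_ring_1)" "\<alpha> \<in> padic_int CHAR('a)"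
  shows "agr (CHAR('a)^k) (Tf \<alpha> :: 'a fps) ((1 - fps_X)^(\<alpha> k))"
  unfolding agr_def
proof (intro allI impI)
  fix n assume n: "n < CHAR('a)^k"
  let ?p = "CHAR('a)"
  have p2: "?p \<ge> 2" using assms(1) prime_ge_2_nat by blast
  define m where "m = min (Suc n) k"
  have nm: "n < ?p^m"
  proof (cases "Suc n \<le> k")
    case True
    have "n < 2^n" by (rule less_exp)
    also have "\<dots> \<le> ?p^n" using p2 by (simp add: power_mono)
    also have "\<dots> \<le> ?p^(Suc n)" using p2 by simp
    finally show ?thesis using True by (simp add: m_def)
  next
    case False then show ?thesis using n by (simp add: m_def)
  qed
  have "\<alpha> (Suc n) mod ?p^m = \<alpha> k mod ?p^m"
    using padic_mod[OF assms(2), of m "Suc n"] padic_mod[OF assms(2), of m k] by (simp add: m_def)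
  from pow_congr[OF assms(1) this] nm
  show "(Tf \<alpha> :: 'a fps) $ n = ((1 - fps_X)^(\<alpha> k)) $ n"
    by (simp add: agr_def Tf_def)
qed

definition tr :: "nat \<Rightarrow> 'a::comm_ring_1 fps \<Rightarrow> nat \<Rightarrow> 'a" where
  "tr N f = (\<lambda>i. if i < N then f$i else 0)"

lemma tr_eq_iff: "tr N f = tr N g \<longleftrightarrow> agr N f g"
  by (auto simp: tr_def agr_def fun_eq_iff)

lemma agr_tr: "agr N (Abs_fps (tr N f)) f"
  by (simp add: agr_def tr_def)

lemma tr_binop:
  assumes "\<And>a a' b b'. agr N a a' \<Longrightarrow> agr N b b' \<Longrightarrow> agr N (f a b) (f a' b')"
  shows "tr N ` {f a b |a b. a\<in>S \<and> b\<in>S} \<subseteq> (\<lambda>(u,v). tr N (f (Abs_fps u) (Abs_fps v))) ` (tr N ` S \<times> tr N ` S)"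
proof
  fix x assume "x \<in> tr N ` {f a b |a b. a\<in>S \<and> b\<in>S}"
  then obtain a b where ab: "a \<in> S" "b \<in> S" "x = tr N (f a b)" by blast
  have "tr N (f (Abs_fps (tr N a)) (Abs_fps (tr N b))) = tr N (f a b)"
    unfolding tr_eq_iff by (intro assms agr_tr)
  then show "x \<in> (\<lambda>(u,v). tr N (f (Abs_fps u) (Abs_fps v))) ` (tr N ` S \<times> tr N ` S)"
    using ab by (auto intro!: image_eqI[of _ _ "(tr N a, tr N b)"])
qed

lemma tr_unop:
  assumes "\<And>a a'. agr N a a' \<Longrightarrow> agr N (f a) (f a')"
  shows "tr N ` (f ` S) \<subseteq> (\<lambda>u. tr N (f (Abs_fps u))) ` (tr N ` S)"
proof
  fix x assume "x \<in> tr N ` (f ` S)"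
  then obtain a where a: "a \<in> S" "x = tr N (f a)" by blast
  have "tr N (f (Abs_fps (tr N a))) = tr N (f a)"
    unfolding tr_eq_iff by (intro assms agr_tr)
  then show "x \<in> (\<lambda>u. tr N (f (Abs_fps u))) ` (tr N ` S)"
    using a by (auto intro!: image_eqI[of _ _ "tr N a"])
qed

lemma card_binop:
  assumes "\<And>a a' b b'. agr N a a' \<Longrightarrow> agr N b b' \<Longrightarrow> agr N (f a b) (f a' b')"
    and "finite (tr N ` S)"
  shows "finite (tr N ` {f a b |a b. a\<in>S \<and> b\<in>S})"
    "card (tr N ` {f a b |a b. a\<in>S \<and> b\<in>S}) \<le> card (tr N ` S) * card (tr N ` S)"
proof -
  have fin: "finite ((\<lambda>(u,v). tr N (f (Abs_fps u) (Abs_fps v))) ` (tr N ` S \<times> tr N ` S))"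
    using assms(2) by simp
  show "finite (tr N ` {f a b |a b. a\<in>S \<and> b\<in>S})"
    using finite_subset[OF tr_binop[OF assms(1)] fin] .
  have "card (tr N ` {f a b |a b. a\<in>S \<and> b\<in>S}) \<le> card ((\<lambda>(u,v). tr N (f (Abs_fps u) (Abs_fps v))) ` (tr N ` S \<times> tr N ` S))"
    by (rule card_mono[OF fin tr_binop[OF assms(1)]])
  also have "\<dots> \<le> card (tr N ` S \<times> tr N ` S)" by (rule card_image_le) (use assms(2) in simp)
  also have "\<dots> = card (tr N ` S) * card (tr N ` S)" by (simp add: card_cartesian_product)
  finally show "card (tr N ` {f a b |a b. a\<in>S \<and> b\<in>S}) \<le> card (tr N ` S) * card (tr N ` S)" .
qed

lemma card_unop:
  assumes "\<And>a a'. agr N a a' \<Longrightarrow> agr N (f a) (f a')"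
    and "finite (tr N ` S)"
  shows "finite (tr N ` (f ` S))" "card (tr N ` (f ` S)) \<le> card (tr N ` S)"
proof -
  have fin: "finite ((\<lambda>u. tr N (f (Abs_fps u))) ` (tr N ` S))"
    using assms(2) by simp
  show "finite (tr N ` (f ` S))"
    using finite_subset[OF tr_unop[OF assms(1)] fin] .
  have "card (tr N ` (f ` S)) \<le> card ((\<lambda>u. tr N (f (Abs_fps u))) ` (tr N ` S))"
    by (rule card_mono[OF fin tr_unop[OF assms(1)]])
  also have "\<dots> \<le> card (tr N ` S)" by (rule card_image_le) (use assms(2) in simp)
  finally show "card (tr N ` (f ` S)) \<le> card (tr N ` S)" .
qed

primrec Rs :: "(nat\<Rightarrow>nat) set \<Rightarrow> nat \<Rightarrow> 'a::comm_ring_1 fps set" where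
  "Rs P 0 = {0, 1} \<union> Tf ` P"
| "Rs P (Suc j) = Rs P j \<union> {a+b |a b. a \<in> Rs P j \<and> b \<in> Rs P j}
     \<union> {a*b |a b. a \<in> Rs P j \<and> b \<in> Rs P j} \<union> uminus ` Rs P j"

lemma arith_bound:
  fixes c B e :: nat
  assumes "c \<le> B^e" "3 \<le> B"
  shows "c + c*c + c*c + c \<le> B^(2*e+2)"
proof (cases "c = 0")
  case True then show ?thesis by simp
next
  case False
  have "c \<le> c*c" using False by simp
  then have "c + c*c + c*c + c \<le> 4*(c*c)" by linarith
  also have "\<dots> \<le> (B*B)*(c*c)"
  proof -
    have "4 \<le> B*B" using assms(2) mult_le_mono[OF assms(2) assms(2)] by simp
    then show ?thesis by simp
  qed
  also have "\<dots> \<le> (B*B)*(B^e*B^e)" using assms(1) by (intro mult_le_mono mult_le_mono2) auto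
  also have "\<dots> = B^(2*e+2)"
  proof -
    have "B^(2*e+2) = B^((e+e)+2)" by (simp add: mult_2)
    also have "\<dots> = B^e*B^e*(B*B)" by (simp only: power_add power2_eq_square)
    finally show ?thesis by (metis mult.commute)
  qed
  finally show ?thesis .
qed

lemma card_Un4: "card (A \<union> B \<union> C \<union> D) \<le> card A + card B + card C + card D"
  using card_Un_le[of "A\<union>B\<union>C" D] card_Un_le[of "A\<union>B" C] card_Un_le[of A B] by linarith

lemma Rs_thin:
  assumes "prime CHAR('a::comm_ring_1)"
  shows "\<exists>e. \<forall>k. finite (tr (CHAR('a)^k) ` (Rs (padic_int CHAR('a)) j :: 'a fps set))
          \<and> card (tr (CHAR('a)^k) ` (Rs (padic_int CHAR('a)) j :: 'a fps set)) \<le> (3*CHAR('a)^k)^e"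
proof (induction j)
  case 0
  show ?case
  proof (intro exI[of _ 1] allI)
    fix k
    let ?N = "CHAR('a)^k"
    let ?P = "padic_int CHAR('a)"
    have sub: "tr ?N ` (Rs ?P 0 :: 'a fps set) \<subseteq> {tr ?N 0, tr ?N 1} \<union> (\<lambda>a. tr ?N ((1 - fps_X :: 'a fps)^a)) ` {..<?N}"
    proof
      fix x assume "x \<in> tr ?N ` (Rs ?P 0 :: 'a fps set)"
      then consider "x = tr ?N 0" | "x = tr ?N 1" | \<alpha> where "\<alpha> \<in> ?P" "x = tr ?N (Tf \<alpha> :: 'a fps)" by auto
      then show "x \<in> {tr ?N 0, tr ?N 1} \<union> (\<lambda>a. tr ?N ((1 - fps_X :: 'a fps)^a)) ` {..<?N}"
      proof cases
        case 3
        have "tr ?N (Tf \<alpha> :: 'a fps) = tr ?N ((1 - fps_X)^(\<alpha> k))"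
          unfolding tr_eq_iff by (rule Tf_agr[OF assms 3(1)])
        moreover have "\<alpha> k < ?N" using 3(1) by (simp add: padic_int_def)
        ultimately show ?thesis using 3(2) by auto
      qed auto
    qed
    have fin: "finite ({tr ?N 0, tr ?N 1} \<union> (\<lambda>a. tr ?N ((1 - fps_X :: 'a fps)^a)) ` {..<?N})" by simp
    have "card (tr ?N ` (Rs ?P 0 :: 'a fps set)) \<le> card ({tr ?N 0, tr ?N 1} \<union> (\<lambda>a. tr ?N ((1 - fps_X :: 'a fps)^a)) ` {..<?N})"
      by (rule card_mono[OF fin sub])
    also have "\<dots> \<le> card {tr ?N 0, tr ?N (1::'a fps)} + card ((\<lambda>a. tr ?N ((1 - fps_X :: 'a fps)^a)) ` {..<?N})"
      by (rule card_Un_le)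
    also have "\<dots> \<le> 2 + ?N"
      by (intro add_mono card_image_le[THEN order_trans]) (auto simp: card_insert_if)
    also have "\<dots> \<le> (3*?N)^1"
    proof -
      have "0 < CHAR('a)" using assms prime_gt_0_nat by blast
      then have "1 \<le> ?N" by (simp add: Suc_le_eq)
      then show ?thesis by simp
    qed
    finally show "finite (tr ?N ` (Rs ?P 0 :: 'a fps set)) \<and> card (tr ?N ` (Rs ?P 0 :: 'a fps set)) \<le> (3*?N)^1"
      using finite_subset[OF sub fin] by simp
  qed
next
  case (Suc j)
  then obtain e where e: "\<And>k. finite (tr (CHAR('a)^k) ` (Rs (padic_int CHAR('a)) j :: 'a fps set))
          \<and> card (tr (CHAR('a)^k) ` (Rs (padic_int CHAR('a)) j :: 'a fps set)) \<le> (3*CHAR('a)^k)^e" by blast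
  show ?case
  proof (intro exI[of _ "2*e+2"] allI)
    fix k
    let ?N = "CHAR('a)^k"
    let ?S = "Rs (padic_int CHAR('a)) j :: 'a fps set"
    let ?S' = "Rs (padic_int CHAR('a)) (Suc j) :: 'a fps set"
    have f0: "finite (tr ?N ` ?S)" and c0: "card (tr ?N ` ?S) \<le> (3*?N)^e" using e[of k] by auto
    have h1: "\<And>a a' b b'. agr ?N a a' \<Longrightarrow> agr ?N b b' \<Longrightarrow> agr ?N (a+b) (a'+b')" by (rule agr_add)
    have h2: "\<And>a a' b b'. agr ?N a a' \<Longrightarrow> agr ?N b b' \<Longrightarrow> agr ?N (a*b) (a'*b')" by (rule agr_mult)
    have h3: "\<And>a a'. agr ?N a a' \<Longrightarrow> agr ?N (-a) (-a')" by (rule agr_uminus)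
    have a1: "finite (tr ?N ` {a+b |a b. a\<in>?S \<and> b\<in>?S})"
      "card (tr ?N ` {a+b |a b. a\<in>?S \<and> b\<in>?S}) \<le> card (tr ?N ` ?S) * card (tr ?N ` ?S)"
      by (rule card_binop[OF _ f0]; rule agr_add; assumption)+
    have a2: "finite (tr ?N ` {a*b |a b. a\<in>?S \<and> b\<in>?S})"
      "card (tr ?N ` {a*b |a b. a\<in>?S \<and> b\<in>?S}) \<le> card (tr ?N ` ?S) * card (tr ?N ` ?S)"
      by (rule card_binop[OF _ f0]; rule agr_mult; assumption)+
    have a3: "finite (tr ?N ` (uminus ` ?S))" "card (tr ?N ` (uminus ` ?S)) \<le> card (tr ?N ` ?S)"
      by (rule card_unop[OF _ f0]; rule agr_uminus; assumption)+
    have eq: "tr ?N ` ?S' = tr ?N ` ?S \<union> tr ?N ` {a+b |a b. a\<in>?S \<and> b\<in>?S}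
        \<union> tr ?N ` {a*b |a b. a\<in>?S \<and> b\<in>?S} \<union> tr ?N ` (uminus ` ?S)"
      by (simp add: image_Un)
    have "card (tr ?N ` ?S') \<le>
        card (tr ?N ` ?S) + card (tr ?N ` ?S) * card (tr ?N ` ?S) + card (tr ?N ` ?S) * card (tr ?N ` ?S) + card (tr ?N ` ?S)"
      unfolding eq
      apply (rule order_trans[OF card_Un4])
      apply (intro add_mono a1(2) a2(2) a3(2) order_refl)
      done
    also have "\<dots> \<le> (3*?N)^(2*e+2)"
    proof (rule arith_bound[OF c0])
      have "0 < CHAR('a)" using assms prime_gt_0_nat by blast
      then have "1 \<le> ?N" by (simp add: Suc_le_eq)
      then show "3 \<le> 3*?N" by simp
    qed
    finally show "finite (tr ?N ` ?S') \<and> card (tr ?N ` ?S') \<le> (3*?N)^(2*e+2)"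
      using f0 a1(1) a2(1) a3(1) eq by simp
  qed
qed

lemma Rs_mono: "i \<le> j \<Longrightarrow> Rs P i \<subseteq> Rs P j"
  by (rule lift_Suc_mono_le[of "Rs P"]) auto

definition Rall :: "(nat\<Rightarrow>nat) set \<Rightarrow> 'a::comm_ring_1 fps set" where
  "Rall P = (\<Union>j. Rs P j)"

lemma Rall_binop:
  assumes "a \<in> Rall P" "b \<in> Rall P"
  obtains j where "a \<in> Rs P j" "b \<in> Rs P j"
proof -
  obtain i j where "a \<in> Rs P i" "b \<in> Rs P j" using assms by (auto simp: Rall_def)
  then show ?thesis using Rs_mono[of i "max i j" P] Rs_mono[of j "max i j" P] that by auto
qed

lemma Rall_add: "a \<in> Rall P \<Longrightarrow> b \<in> Rall P \<Longrightarrow> a + b \<in> Rall P"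
proof (erule (1) Rall_binop)
  fix j assume "a \<in> Rs P j" "b \<in> Rs P j"
  then have "a + b \<in> Rs P (Suc j)" by auto
  then show "a + b \<in> Rall P" unfolding Rall_def by blast
qed

lemma Rall_mult: "a \<in> Rall P \<Longrightarrow> b \<in> Rall P \<Longrightarrow> a * b \<in> Rall P"
proof (erule (1) Rall_binop)
  fix j assume "a \<in> Rs P j" "b \<in> Rs P j"
  then have "a * b \<in> Rs P (Suc j)" by auto
  then show "a * b \<in> Rall P" unfolding Rall_def by blast
qed

lemma Rall_uminus: "a \<in> Rall P \<Longrightarrow> - a \<in> Rall P"
proof -
  assume "a \<in> Rall P"
  then obtain j where "a \<in> Rs P j" by (auto simp: Rall_def)
  then have "- a \<in> Rs P (Suc j)" by auto
  then show "- a \<in> Rall P" unfolding Rall_def by blast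
qed

lemma Rall_0: "0 \<in> Rall P" and Rall_1: "1 \<in> Rall P" and Rall_Tf: "\<alpha> \<in> P \<Longrightarrow> Tf \<alpha> \<in> Rall P"
  by (auto simp: Rall_def intro!: exI[of _ 0])

lemma Rall_prod: "finite F \<Longrightarrow> (\<And>v. v \<in> F \<Longrightarrow> f v \<in> Rall P) \<Longrightarrow> prod f F \<in> Rall P"
  by (induction F rule: finite_induct) (auto intro: Rall_mult Rall_1)

lemma Rall_common:
  "finite F \<Longrightarrow> (\<And>v. v \<in> F \<Longrightarrow> f v \<in> Rall P) \<Longrightarrow> \<exists>j. \<forall>v\<in>F. f v \<in> Rs P j"
proof (induction F rule: finite_induct)
  case empty then show ?case by simp
next
  case (insert x F)
  then obtain j where j: "\<forall>v\<in>F. f v \<in> Rs P j" by auto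
  obtain i where i: "f x \<in> Rs P i" using insert.prems by (auto simp: Rall_def)
  show ?case
    using j i Rs_mono[of i "max i j" P] Rs_mono[of j "max i j" P]
    by (intro exI[of _ "max i j"]) auto
qed

definition Qs :: "(nat\<Rightarrow>nat) set \<Rightarrow> 'a::field fls set" where
  "Qs P = {fps_to_fls n / fps_to_fls d |n d. n \<in> Rall P \<and> d \<in> Rall P \<and> d \<noteq> 0}"

lemma Qs_subfield: "is_subfield (Qs P :: 'a::field fls set)"
  unfolding is_subfield_def
proof (intro conjI ballI)
  show "0 \<in> Qs P" unfolding Qs_def
    by (rule CollectI, rule exI[of _ 0], rule exI[of _ 1]) (simp add: Rall_0 Rall_1)
  show "1 \<in> Qs P" unfolding Qs_def
    by (rule CollectI, rule exI[of _ 1], rule exI[of _ 1]) (simp add: Rall_1)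
next
  fix x y :: "'a fls" assume x: "x \<in> Qs P" and y: "y \<in> Qs P"
  obtain n d where nd: "x = fps_to_fls n / fps_to_fls d" "n \<in> Rall P" "d \<in> Rall P" "d \<noteq> 0"
    using x by (auto simp: Qs_def)
  obtain n' d' where nd': "y = fps_to_fls n' / fps_to_fls d'" "n' \<in> Rall P" "d' \<in> Rall P" "d' \<noteq> 0"
    using y by (auto simp: Qs_def)
  have "x + y = fps_to_fls (n * d' + n' * d) / fps_to_fls (d * d')"
    using nd nd' by (simp add: add_frac_eq fls_times_fps_to_fls)
  then show "x + y \<in> Qs P" unfolding Qs_def using nd nd'
    by (intro CollectI exI[of _ "n * d' + n' * d"] exI[of _ "d * d'"])
       (simp add: Rall_add Rall_mult)
  have "x * y = fps_to_fls (n * n') / fps_to_fls (d * d')"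
    using nd nd' by (simp add: fls_times_fps_to_fls)
  then show "x * y \<in> Qs P" unfolding Qs_def using nd nd'
    by (intro CollectI exI[of _ "n * n'"] exI[of _ "d * d'"])
       (simp add: Rall_mult)
next
  fix x :: "'a fls" assume x: "x \<in> Qs P"
  obtain n d where nd: "x = fps_to_fls n / fps_to_fls d" "n \<in> Rall P" "d \<in> Rall P" "d \<noteq> 0"
    using x by (auto simp: Qs_def)
  have "- x = fps_to_fls (- n) / fps_to_fls d" using nd by simp
  then show "- x \<in> Qs P" unfolding Qs_def using nd
    by (intro CollectI exI[of _ "- n"] exI[of _ d]) (simp add: Rall_uminus)
  show "inverse x \<in> Qs P"
  proof (cases "n = 0")
    case True
    then have "inverse x = fps_to_fls 0 / fps_to_fls 1" using nd by simp
    then show ?thesis unfolding Qs_def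
      by (intro CollectI exI[of _ 0] exI[of _ 1]) (simp add: Rall_0 Rall_1)
  next
    case False
    then have "inverse x = fps_to_fls d / fps_to_fls n" using nd by simp
    then show ?thesis unfolding Qs_def using nd False
      by (intro CollectI exI[of _ d] exI[of _ n]) simp
  qed
qed

lemma K_sub_Q: "subfield_generated ((tau :: _ \<Rightarrow> 'a::field fls) ` P) \<subseteq> Qs P"
  unfolding subfield_generated_def
proof (rule Inter_lower, rule CollectI, rule conjI)
  show "(tau :: _ \<Rightarrow> 'a::field fls) ` P \<subseteq> Qs P"
  proof
    fix x assume "x \<in> (tau :: _ \<Rightarrow> 'a::field fls) ` P"
    then obtain \<alpha> where a: "\<alpha> \<in> P" "x = tau \<alpha>" by auto
    then have "x = fps_to_fls (Tf \<alpha>) / fps_to_fls 1" by (simp add: tau_Tf)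
    then show "x \<in> Qs P" unfolding Qs_def using a
      by (intro CollectI exI[of _ "Tf \<alpha>"] exI[of _ 1]) (simp add: Rall_Tf Rall_1)
  qed
qed (rule Qs_subfield)

lemma subfield_generated_subfield: "is_subfield (subfield_generated S)"
  unfolding subfield_generated_def is_subfield_def by auto


lemma diagonal:
  fixes A :: "nat \<Rightarrow> 'a::zero fps set"
  assumes "\<And>j m0 (w::nat \<Rightarrow> 'a). \<exists>M>m0. \<exists>w'. (\<forall>i<m0. w' i = w i) \<and> (\<forall>g\<in>A j. \<exists>i<M. g$i \<noteq> w' i)"
  shows "\<exists>g. \<forall>j. g \<notin> A j"
proof -
  define pick where "pick j m0 w = (SOME Mw::nat \<times> (nat \<Rightarrow> 'a). fst Mw > m0 \<and> (\<forall>i<m0. snd Mw i = w i) \<and> (\<forall>g\<in>A j. \<exists>i<fst Mw. g$i \<noteq> snd Mw i))" for j m0 w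
  define Mf where "Mf j m0 w = fst (pick j m0 w)" for j m0 w
  define wf where "wf j m0 w = snd (pick j m0 w)" for j m0 w
  have H: "Mf j m0 w > m0 \<and> (\<forall>i<m0. wf j m0 w i = w i) \<and> (\<forall>g\<in>A j. \<exists>i<Mf j m0 w. g$i \<noteq> wf j m0 w i)" for j m0 w
  proof -
    obtain M w' where Mw: "M > m0" "\<forall>i<m0. w' i = w i" "\<forall>g\<in>A j. \<exists>i<M. g$i \<noteq> w' i"
      using assms[of m0 w j] by blast
    have "fst (pick j m0 w) > m0 \<and> (\<forall>i<m0. snd (pick j m0 w) i = w i) \<and> (\<forall>g\<in>A j. \<exists>i<fst (pick j m0 w). g$i \<noteq> snd (pick j m0 w) i)"
      unfolding pick_def by (rule someI[of _ "(M, w')"]) (use Mw in simp)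
    then show ?thesis by (simp add: Mf_def wf_def)
  qed
  define st where "st = rec_nat (0::nat, \<lambda>_::nat. 0::'a) (\<lambda>j s. (Mf j (fst s) (snd s), wf j (fst s) (snd s)))"
  have stS: "st (Suc j) = (Mf j (fst (st j)) (snd (st j)), wf j (fst (st j)) (snd (st j)))" for j
    by (simp add: st_def)
  have lt: "fst (st j) < fst (st (Suc j))" for j using H stS by simp
  have ge: "j \<le> fst (st j)" for j
  proof (induction j)
    case (Suc j) then show ?case using lt[of j] by simp
  qed simp
  have mono: "j \<le> j' \<Longrightarrow> fst (st j) \<le> fst (st j')" for j j'
    by (rule lift_Suc_mono_le[of "\<lambda>j. fst (st j)"]) (use lt less_imp_le in auto)
  have cons0: "i < fst (st j) \<Longrightarrow> snd (st (j + d)) i = snd (st j) i" for i j d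
  proof (induction d)
    case (Suc d)
    have "i < fst (st (j + d))" using Suc.prems mono[of j "j + d"] by simp
    then show ?case using Suc H[of "fst (st (j + d))" "j + d" "snd (st (j + d))"] stS[of "j + d"] by simp
  qed simp
  have cons: "i < fst (st j) \<Longrightarrow> j \<le> j' \<Longrightarrow> snd (st j') i = snd (st j) i" for i j j'
    using cons0[of i j "j' - j"] by simp
  define g where "g = Abs_fps (\<lambda>i. snd (st (Suc i)) i)"
  have "g \<notin> A j" for j
  proof
    assume "g \<in> A j"
    then obtain i where i: "i < fst (st (Suc j))" "g$i \<noteq> snd (st (Suc j)) i"
      using H[of "fst (st j)" j "snd (st j)"] stS[of j] by auto
    have i2: "i < fst (st (Suc i))" using ge[of "Suc i"] by simp
    have "snd (st (Suc (max i j))) i = snd (st (Suc i)) i" by (rule cons[OF i2]) simp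
    moreover have "snd (st (Suc (max i j))) i = snd (st (Suc j)) i" by (rule cons[OF i(1)]) simp
    ultimately show False using i(2) by (simp add: g_def)
  qed
  then show ?thesis by blast
qed

definition vz :: "int \<Rightarrow> 'a::zero fls \<Rightarrow> bool" where
  "vz z f \<longleftrightarrow> (\<forall>i<z. fls_nth f i = 0)"

lemma vz_mult:
  fixes f g :: "'a::field fls"
  assumes "vz a f" "vz b g" shows "vz (a+b) (f*g)"
proof (cases "f = 0 \<or> g = 0")
  case True then show ?thesis by (auto simp: vz_def)
next
  case False
  then have "a \<le> fls_subdegree f" "b \<le> fls_subdegree g"
    using assms by (auto simp: vz_def intro!: fls_subdegree_geI)
  then have "a + b \<le> fls_subdegree (f*g)" using False by simp
  then show ?thesis by (simp add: vz_def)
qed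

lemma vz_add: "vz z f \<Longrightarrow> vz z g \<Longrightarrow> vz z (f + g)" by (simp add: vz_def)
lemma vz_diff: "vz z f \<Longrightarrow> vz z (g::'a::ab_group_add fls) \<Longrightarrow> vz z (f - g)" by (simp add: vz_def)
lemma vz_mono: "vz z f \<Longrightarrow> z' \<le> z \<Longrightarrow> vz z' f" by (simp add: vz_def)
lemma vz_sum: "(\<And>i. i \<in> I \<Longrightarrow> vz z (f i)) \<Longrightarrow> vz z (sum f I)"
  by (induction I rule: infinite_finite_induct) (auto simp: vz_def)
lemma vz_fps: "vz 0 (fps_to_fls f)" by (simp add: vz_def)
lemma vz_agr: "agr L a a' \<Longrightarrow> vz (int L) (fps_to_fls (a - a'))"
  by (auto simp: vz_def agr_def)

lemma determ:
  fixes g g' D D' :: "'a::field fps" and N N' :: "nat \<Rightarrow> 'a fps" and bb :: "nat \<Rightarrow> 'a fls"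
  assumes D: "D \<noteq> 0" "subdegree D = e"
    and agD: "agr L D D'" and agN: "\<And>i. i \<in> I \<Longrightarrow> agr L (N i) (N' i)"
    and eq: "fps_to_fls g * fps_to_fls D = (\<Sum>i\<in>I. fps_to_fls (N i) * bb i)"
    and eq': "fps_to_fls g' * fps_to_fls D' = (\<Sum>i\<in>I. fps_to_fls (N' i) * bb i)"
    and bbv: "\<And>i. i \<in> I \<Longrightarrow> vz (- int v0) (bb i)"
  shows "agr (L - e - v0) g g'"
proof -
  let ?G = "fps_to_fls g" and ?G' = "fps_to_fls g'" and ?D = "fps_to_fls D" and ?D' = "fps_to_fls D'"
  have "?G * ?D - ?G' * ?D' = (\<Sum>i\<in>I. fps_to_fls (N i - N' i) * bb i)"
    using eq eq' by (simp add: sum_subtractf algebra_simps)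
  moreover have "vz (int L - int v0) (\<Sum>i\<in>I. fps_to_fls (N i - N' i) * bb i)"
    using vz_mult[OF vz_agr[OF agN] bbv] by (intro vz_sum) simp
  ultimately have v1: "vz (int L - int v0) (?G * ?D - ?G' * ?D')" by simp
  have v2: "vz (0 + int L) (?G' * (?D - ?D'))"
    using vz_mult[OF vz_fps vz_agr[OF agD]] by (simp add: fls_times_fps_to_fls)
  have "(?G - ?G') * ?D = (?G * ?D - ?G' * ?D') - ?G' * (?D - ?D')" by (simp add: algebra_simps)
  moreover have "vz (int L - int v0) ((?G * ?D - ?G' * ?D') - ?G' * (?D - ?D'))"
    by (rule vz_diff[OF v1 vz_mono[OF v2]]) simp
  ultimately have v3: "vz (int L - int v0) ((?G - ?G') * ?D)" by simp
  show ?thesis unfolding agr_def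
  proof (intro allI impI)
    fix i assume i: "i < L - e - v0"
    show "g $ i = g' $ i"
    proof (cases "?G = ?G'")
      case True then show ?thesis by simp
    next
      case False
      then have ne: "(?G - ?G') * ?D \<noteq> 0" using D by simp
      have "int L - int v0 \<le> fls_subdegree ((?G - ?G') * ?D)"
        by (rule fls_subdegree_geI) (use ne v3 in \<open>auto simp: vz_def\<close>)
      also have "\<dots> = fls_subdegree (?G - ?G') + int e"
        using False D by (simp add: fls_subdegree_fls_to_fps)
      finally have "int i < fls_subdegree (?G - ?G')" using i by linarith
      then have "fls_nth (?G - ?G') (int i) = 0" by (rule fls_eq0_below_subdegree)
      then have "fls_nth (fps_to_fls (g - g')) (int i) = 0" by simp
      then show ?thesis by simp
    qed
  qed
qed


definition Acl :: "(nat \<Rightarrow> 'a::field fls) \<Rightarrow> nat \<times> nat \<times> nat list \<Rightarrow> 'a fps set" where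
  "Acl bb prm = (case prm of (j, e, S) \<Rightarrow> {g. \<exists>D N. D \<in> Rs (padic_int CHAR('a)) j \<and> D \<noteq> 0 \<and> subdegree D = e \<and>
      (\<forall>i\<in>set S. N i \<in> Rs (padic_int CHAR('a)) j) \<and>
      fps_to_fls g * fps_to_fls D = (\<Sum>i\<in>set S. fps_to_fls (N i) * bb i)})"

lemma Acl_nd:
  fixes bb :: "nat \<Rightarrow> 'a::field fls"
  assumes pr: "prime CHAR('a)" and crd: "CARD('a) = CHAR('a)"
  shows "\<exists>M>m0. \<exists>w'. (\<forall>i<m0. w' i = w i) \<and> (\<forall>g\<in>Acl bb (j,e,S). \<exists>i<M. g$i \<noteq> w' i)"
proof -
  let ?p = "CHAR('a)"
  let ?P = "padic_int ?p"
  let ?A = "Acl bb (j,e,S)"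
  obtain E where E: "\<And>k. finite (tr (?p^k) ` (Rs ?P j :: 'a fps set)) \<and> card (tr (?p^k) ` (Rs ?P j :: 'a fps set)) \<le> (3*?p^k)^E"
    using Rs_thin[OF pr, of j] by blast
  define v0 where "v0 = (\<Sum>i\<in>set S. nat (- fls_subdegree (bb i)))"
  have bbv: "vz (- int v0) (bb i)" if "i \<in> set S" for i
  proof -
    have "nat (- fls_subdegree (bb i)) \<le> v0" unfolding v0_def using that by (intro member_le_sum) auto
    then have "- int v0 \<le> fls_subdegree (bb i)" by linarith
    then show ?thesis by (auto simp: vz_def)
  qed
  define s where "s = card (set S)"
  define E' where "E' = E * (s + 1)"
  define c where "c = m0 + e + v0 + 1"
  have p2: "?p \<ge> 2" using pr prime_ge_2_nat by blast
  have "eventually (\<lambda>N::nat. (3 * real N) ^ E' * real (?p ^ c) < 2 ^ N) at_top" by real_asymp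
  then obtain N0 where N0: "\<And>N. N \<ge> N0 \<Longrightarrow> (3 * real N) ^ E' * real (?p ^ c) < 2 ^ N"
    by (auto simp: eventually_at_top_linorder)
  define k where "k = N0 + c"
  define N where "N = ?p ^ k"
  have "k < 2^k" by (rule less_exp)
  also have "2^k \<le> N" unfolding N_def using p2 by (simp add: power_mono)
  finally have kN: "k < N" .
  then have NN0: "N \<ge> N0" and Nc: "N \<ge> c" by (auto simp: k_def)
  have "(3 * real N) ^ E' * real (?p ^ c) < 2 ^ N" using N0[OF NN0] .
  also have "(2::real) ^ N \<le> real ?p ^ N" using p2 by (intro power_mono) auto
  finally have "real ((3 * N) ^ E' * ?p ^ c) < real (?p ^ N)" by simp
  then have big: "(3 * N) ^ E' * ?p ^ c < ?p ^ N" by (simp only: of_nat_less_iff)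
  define M where "M = N - e - v0"
  have Mm0: "M > m0" using Nc by (simp add: M_def c_def)
  have Mpow: "(3*N)^E' < ?p ^ (M - m0)"
  proof -
    have "?p ^ N = ?p ^ c * ?p ^ (N - c)" using Nc by (simp flip: power_add)
    with big have "(3 * N) ^ E' * ?p ^ c < ?p ^ (N - c) * ?p ^ c" by (simp add: mult.commute)
    then have "(3 * N) ^ E' < ?p ^ (N - c)" using mult_less_cancel2 by blast
    also have "\<dots> \<le> ?p ^ (M - m0)" using p2 by (intro power_increasing) (auto simp: M_def c_def)
    finally show ?thesis .
  qed
  define T where "T = tr N ` (Rs ?P j :: 'a fps set)"
  have Tfin: "finite T" and Tcard: "card T \<le> (3*N)^E" using E[of k] by (simp_all add: T_def N_def)
  define Keys where "Keys = T \<times> PiE (set S) (\<lambda>_. T)"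
  have Kfin: "finite Keys" by (simp add: Keys_def Tfin finite_PiE)
  have "card Keys = card T * card T ^ s" by (simp add: Keys_def card_cartesian_product card_PiE Tfin s_def)
  also have "\<dots> \<le> (3*N)^E * ((3*N)^E)^s" by (intro mult_le_mono power_mono Tcard) auto
  also have "\<dots> = (3*N)^E'" by (simp add: E'_def power_mult power_add)
  finally have Kcard: "card Keys \<le> (3*N)^E'" .
  define cond where "cond g DN \<longleftrightarrow> fst DN \<in> Rs ?P j \<and> fst DN \<noteq> 0 \<and> subdegree (fst DN) = e \<and>
      (\<forall>i\<in>set S. snd DN i \<in> Rs ?P j) \<and>
      fps_to_fls g * fps_to_fls (fst DN) = (\<Sum>i\<in>set S. fps_to_fls (snd DN i) * bb i)" for g and DN :: "'a fps \<times> (nat \<Rightarrow> 'a fps)"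
  define wit where "wit g = (SOME DN. cond g DN)" for g
  have witP: "cond g (wit g)" if "g \<in> ?A" for g
  proof -
    from that obtain D Nn where "cond g (D, Nn)" by (auto simp: Acl_def cond_def)
    then show ?thesis unfolding wit_def by (rule someI)
  qed
  define key where "key g = (tr N (fst (wit g)), restrict (\<lambda>i. tr N (snd (wit g) i)) (set S))" for g
  have keyin: "key g \<in> Keys" if "g \<in> ?A" for g
    using witP[OF that] by (auto simp: key_def Keys_def T_def cond_def)
  have keydet: "tr M g = tr M g'" if "g \<in> ?A" "g' \<in> ?A" "key g = key g'" for g g'
  proof -
    have c1: "cond g (wit g)" and c2: "cond g' (wit g')" using witP that by auto
    have agD: "agr N (fst (wit g)) (fst (wit g'))" using that(3) by (simp add: key_def tr_eq_iff)
    have agN: "agr N (snd (wit g) i) (snd (wit g') i)" if "i \<in> set S" for i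
    proof -
      have "restrict (\<lambda>i. tr N (snd (wit g) i)) (set S) i = restrict (\<lambda>i. tr N (snd (wit g') i)) (set S) i"
        using \<open>key g = key g'\<close> by (simp add: key_def)
      then show ?thesis using that by (simp add: tr_eq_iff)
    qed
    have "agr (N - e - v0) g g'"
      by (rule determ[where I="set S" and bb=bb, OF _ _ agD agN]) (use c1 c2 bbv in \<open>auto simp: cond_def\<close>)
    then show ?thesis by (simp add: tr_eq_iff M_def)
  qed
  have trsub: "tr M ` ?A \<subseteq> (\<lambda>\<kappa>. tr M (SOME g. g \<in> ?A \<and> key g = \<kappa>)) ` (key ` ?A)"
  proof
    fix x assume "x \<in> tr M ` ?A"
    then obtain g where g: "g \<in> ?A" "x = tr M g" by blast
    have "(SOME g'. g' \<in> ?A \<and> key g' = key g) \<in> ?A \<and> key (SOME g'. g' \<in> ?A \<and> key g' = key g) = key g"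
      by (rule someI[of _ g]) (use g in simp)
    then have "tr M (SOME g'. g' \<in> ?A \<and> key g' = key g) = tr M g"
      using keydet g(1) by blast
    then show "x \<in> (\<lambda>\<kappa>. tr M (SOME g. g \<in> ?A \<and> key g = \<kappa>)) ` (key ` ?A)"
      using g by (auto intro!: image_eqI[of _ _ "key g"])
  qed
  have kAsub: "key ` ?A \<subseteq> Keys" using keyin by blast
  have kAfin: "finite (key ` ?A)" using finite_subset[OF kAsub Kfin] .
  have trfin: "finite (tr M ` ?A)" using finite_subset[OF trsub] kAfin by blast
  have "card (tr M ` ?A) \<le> card ((\<lambda>\<kappa>. tr M (SOME g. g \<in> ?A \<and> key g = \<kappa>)) ` (key ` ?A))"
    by (rule card_mono[OF _ trsub]) (use kAfin in simp)
  also have "\<dots> \<le> card (key ` ?A)" by (rule card_image_le[OF kAfin])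
  also have "\<dots> \<le> card Keys" by (rule card_mono[OF Kfin kAsub])
  finally have cardA: "card (tr M ` ?A) < ?p ^ (M - m0)" using Kcard Mpow by linarith
  define ext where "ext f = (\<lambda>i. if i < m0 then w i else if i < M then f i else 0)" for f :: "nat \<Rightarrow> 'a"
  define PE where "PE = PiE {m0..<M} (\<lambda>_. UNIV :: 'a set)"
  have inj: "inj_on ext PE"
  proof (rule inj_onI)
    fix f f' assume f: "f \<in> PE" "f' \<in> PE" "ext f = ext f'"
    have "f x = f' x" for x
    proof (cases "x \<in> {m0..<M}")
      case True
      have "ext f x = ext f' x" using f(3) by (rule fun_cong)
      then show ?thesis using True by (simp add: ext_def)
    next
      case False
      have "f x = undefined" by (rule PiE_arb[OF f(1)[unfolded PE_def] False])
      moreover have "f' x = undefined" by (rule PiE_arb[OF f(2)[unfolded PE_def] False])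
      ultimately show ?thesis by simp
    qed
    then show "f = f'" by blast
  qed
  have "card (ext ` PE) = ?p ^ (M - m0)"
  proof -
    have "card (ext ` PE) = card PE" by (rule card_image[OF inj])
    also have "\<dots> = (\<Prod>i\<in>{m0..<M}. card (UNIV :: 'a set))" unfolding PE_def by (rule card_PiE) simp
    also have "\<dots> = ?p ^ (M - m0)" by (simp add: crd)
    finally show ?thesis .
  qed
  note cE = this
  have "\<not> ext ` PE \<subseteq> tr M ` ?A"
  proof
    assume "ext ` PE \<subseteq> tr M ` ?A"
    then have "card (ext ` PE) \<le> card (tr M ` ?A)" by (rule card_mono[OF trfin])
    then show False using cardA cE by linarith
  qed
  then obtain f where f: "f \<in> PE" "ext f \<notin> tr M ` ?A" by blast
  have part1: "\<forall>i<m0. ext f i = w i" by (simp add: ext_def)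
  have part2: "\<forall>g\<in>?A. \<exists>i<M. g $ i \<noteq> ext f i"
  proof
    fix g assume g: "g \<in> ?A"
    then have "tr M g \<noteq> ext f" using f(2) by (metis imageI)
    then obtain i where i: "tr M g i \<noteq> ext f i" by blast
    have "i < M"
    proof (rule ccontr)
      assume "\<not> i < M"
      then show False using i Mm0 by (simp add: tr_def ext_def)
    qed
    then show "\<exists>i<M. g $ i \<noteq> ext f i" using i by (auto simp: tr_def)
  qed
  show ?thesis using Mm0 part1 part2 by blast
qed


lemma basis_exists:
  fixes K :: "'a::field set"
  assumes sf: "is_subfield K"
  shows "\<exists>B. basis_over K B"
proof -
  let ?I = "{B. lin_indep_over K B}"
  have "\<exists>M\<in>?I. \<forall>X\<in>?I. M \<subseteq> X \<longrightarrow> X = M"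
  proof (rule subset_Zorn)
    fix C assume C: "subset.chain ?I C"
    show "\<exists>U\<in>?I. \<forall>X\<in>C. X \<subseteq> U"
    proof (cases "C = {}")
      case True then show ?thesis by (intro bexI[of _ "{}"]) (auto simp: lin_indep_over_def)
    next
      case False
      have "\<Union>C \<in> ?I" unfolding lin_indep_over_def
      proof (intro CollectI allI impI)
        fix F c assume H: "finite F \<and> F \<subseteq> \<Union>C \<and> (\<forall>v\<in>F. c v \<in> K) \<and> (\<Sum>v\<in>F. c v * v) = 0"
        obtain B where B: "B \<in> C" "F \<subseteq> B"
          using finite_subset_Union_chain[of F C ?I] H False C by blast
        then have "lin_indep_over K B" using C by (auto simp: subset_chain_def)
        then show "\<forall>v\<in>F. c v = 0" using H B(2) unfolding lin_indep_over_def by blast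
      qed
      then show ?thesis by blast
    qed
  qed
  then obtain B where B: "lin_indep_over K B" "\<And>X. lin_indep_over K X \<Longrightarrow> B \<subseteq> X \<Longrightarrow> X = B" by auto
  have K1: "1 \<in> K" and Kmul: "\<And>x y. x \<in> K \<Longrightarrow> y \<in> K \<Longrightarrow> x * y \<in> K"
    and Kneg: "\<And>x. x \<in> K \<Longrightarrow> - x \<in> K" and Kinv: "\<And>x. x \<in> K \<Longrightarrow> inverse x \<in> K"
    using sf by (auto simp: is_subfield_def)
  have "spans_over K B" unfolding spans_over_def
  proof
    fix y
    show "\<exists>F c. finite F \<and> F \<subseteq> B \<and> (\<forall>v\<in>F. c v \<in> K) \<and> y = (\<Sum>v\<in>F. c v * v)"
    proof (cases "y \<in> B")
      case True
      then show ?thesis using K1 by (intro exI[of _ "{y}"] exI[of _ "\<lambda>_. 1"]) auto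
    next
      case False
      then have "\<not> lin_indep_over K (insert y B)" using B(2)[of "insert y B"] by auto
      then obtain F c where F: "finite F" "F \<subseteq> insert y B" "\<forall>v\<in>F. c v \<in> K" "(\<Sum>v\<in>F. c v * v) = 0"
        and nz: "\<exists>v\<in>F. c v \<noteq> 0"
        unfolding lin_indep_over_def by blast
      have yF: "y \<in> F \<and> c y \<noteq> 0"
      proof (rule ccontr)
        assume a: "\<not> (y \<in> F \<and> c y \<noteq> 0)"
        have s0: "(\<Sum>v\<in>F - {y}. c v * v) = 0"
        proof (cases "y \<in> F")
          case True then have "c y = 0" using a by auto
          then show ?thesis using F(4) sum.remove[OF F(1) True, of "\<lambda>v. c v * v"] by simp
        next
          case False then show ?thesis using F(4) by simp
        qed
        have "finite (F - {y})" "F - {y} \<subseteq> B" "\<forall>v\<in>F - {y}. c v \<in> K" using F by auto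
        then have "\<forall>v\<in>F - {y}. c v = 0" using B(1) s0 unfolding lin_indep_over_def by blast
        then show False using nz a by auto
      qed
      define d where "d v = - c v * inverse (c y)" for v
      have "c y * y + (\<Sum>v\<in>F - {y}. c v * v) = 0" using F(4) sum.remove[OF F(1), of y "\<lambda>v. c v * v"] yF by simp
      then have "c y * y = - (\<Sum>v\<in>F - {y}. c v * v)" by (simp add: eq_neg_iff_add_eq_0)
      then have "y = inverse (c y) * (- (\<Sum>v\<in>F - {y}. c v * v))" using yF by (simp add: field_simps)
      also have "\<dots> = (\<Sum>v\<in>F - {y}. d v * v)" by (simp add: d_def sum_distrib_left sum_negf algebra_simps)
      finally have yeq: "y = (\<Sum>v\<in>F - {y}. d v * v)" .
      have dK: "\<forall>v\<in>F - {y}. d v \<in> K" using F(3) yF by (auto simp: d_def intro!: Kmul Kneg Kinv)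
      show ?thesis using yeq dK F(1,2) by (intro exI[of _ "F - {y}"] exI[of _ d]) auto
    qed
  qed
  then show ?thesis using B(1) by (auto simp: basis_over_def)
qed

lemma fps_to_fls_prod: "fps_to_fls (prod f F) = (\<Prod>v\<in>F. fps_to_fls (f v) :: 'a::comm_ring_1 fls)"
  by (induction F rule: infinite_finite_induct) (simp_all add: fls_times_fps_to_fls)

theorem lemma3p2:
  fixes p :: nat
  assumes "prime p"
    and "CARD('a::field) = p"
  defines "K \<equiv> subfield_generated ((tau :: (nat \<Rightarrow> nat) \<Rightarrow> 'a fls) ` padic_int p)"
  shows "(\<exists>B. basis_over K B) \<and> (\<forall>B. basis_over K B \<longrightarrow> uncountable B)"
proof -
  have chp: "CHAR('a) = p" by (rule char_eq[OF assms(1,2)])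
  have pr: "prime CHAR('a)" using assms(1) chp by simp
  have crd: "CARD('a) = CHAR('a)" using assms(2) chp by simp
  let ?P = "padic_int CHAR('a)"
  have sfK: "is_subfield K" unfolding assms(3) by (rule subfield_generated_subfield)
  have KQ: "K \<subseteq> Qs ?P" unfolding assms(3) using K_sub_Q chp by simp
  show ?thesis
  proof
    show "\<exists>B. basis_over K B" by (rule basis_exists[OF sfK])
    show "\<forall>B. basis_over K B \<longrightarrow> uncountable B"
    proof (intro allI impI)
      fix B assume bas: "basis_over K B"
      show "uncountable B"
      proof
        assume cB: "countable B"
        define h where "h = to_nat_on B"
        have injh: "inj_on h B" unfolding h_def by (rule inj_on_to_nat_on[OF cB])
        define bb where "bb i = inv_into B h i" for i
        have bbh: "bb (h v) = v" if "v \<in> B" for v by (simp add: bb_def inv_into_f_f[OF injh that])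
        define A where "A n = Acl bb (from_nat n :: nat \<times> nat \<times> nat list)" for n
        have "\<exists>g. \<forall>n. g \<notin> A n"
        proof (rule diagonal)
          fix n m0 and w :: "nat \<Rightarrow> 'a"
          obtain j e S where eq: "(from_nat n :: nat \<times> nat \<times> nat list) = (j, e, S)" by (metis prod_cases3)
          show "\<exists>M>m0. \<exists>w'. (\<forall>i<m0. w' i = w i) \<and> (\<forall>g\<in>A n. \<exists>i<M. g$i \<noteq> w' i)"
            using Acl_nd[OF pr crd, of m0 w bb j e S] eq by (simp add: A_def)
        qed
        then obtain g0 where g0: "\<And>n. g0 \<notin> A n" by blast
        from bas obtain F c where F: "finite F" "F \<subseteq> B" "\<forall>v\<in>F. c v \<in> K" "fps_to_fls g0 = (\<Sum>v\<in>F. c v * v)"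
          unfolding basis_over_def spans_over_def by blast
        have "\<forall>v\<in>F. \<exists>nd. fst nd \<in> Rall ?P \<and> snd nd \<in> Rall ?P \<and> snd nd \<noteq> 0 \<and> c v = fps_to_fls (fst nd) / fps_to_fls (snd nd)"
        proof
          fix v assume "v \<in> F"
          then have "c v \<in> Qs ?P" using F(3) KQ by blast
          then obtain n d where "n \<in> Rall ?P" "d \<in> Rall ?P" "d \<noteq> 0" "c v = fps_to_fls n / fps_to_fls d"
            unfolding Qs_def by blast
          then show "\<exists>nd. fst nd \<in> Rall ?P \<and> snd nd \<in> Rall ?P \<and> snd nd \<noteq> 0 \<and> c v = fps_to_fls (fst nd) / fps_to_fls (snd nd)"
            by (intro exI[of _ "(n, d)"]) simp
        qed
        then obtain ndf where ndf: "\<forall>v\<in>F. fst (ndf v) \<in> Rall ?P \<and> snd (ndf v) \<in> Rall ?P \<and> snd (ndf v) \<noteq> 0 \<and> c v = fps_to_fls (fst (ndf v)) / fps_to_fls (snd (ndf v))"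
          by (rule bchoice[elim_format]) blast
        define nf where "nf v = fst (ndf v)" for v
        define df where "df v = snd (ndf v)" for v
        have nd: "nf v \<in> Rall ?P" "df v \<in> Rall ?P" "df v \<noteq> 0" "c v = fps_to_fls (nf v) / fps_to_fls (df v)"
          if "v \<in> F" for v
          using ndf that by (auto simp: nf_def df_def)
        define D where "D = (\<Prod>v\<in>F. df v)"
        define Nn where "Nn v = nf v * (\<Prod>w\<in>F - {v}. df w)" for v
        have Dne: "D \<noteq> 0" using nd(3) F(1) by (simp add: D_def)
        have DR: "D \<in> Rall ?P" unfolding D_def by (rule Rall_prod[OF F(1)]) (rule nd(2))
        have NR: "Nn v \<in> Rall ?P" if "v \<in> F" for v
          unfolding Nn_def using that F(1) by (intro Rall_mult nd(1) Rall_prod) (auto intro: nd(2))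
        have fD: "fps_to_fls D = (\<Prod>v\<in>F. fps_to_fls (df v))" by (simp add: D_def fps_to_fls_prod)
        have key_eq: "fps_to_fls g0 * fps_to_fls D = (\<Sum>v\<in>F. fps_to_fls (Nn v) * v)"
        proof -
          have "fps_to_fls g0 * fps_to_fls D = (\<Sum>v\<in>F. c v * fps_to_fls D * v)"
            unfolding F(4) sum_distrib_right by (simp add: mult_ac)
          also have "\<dots> = (\<Sum>v\<in>F. fps_to_fls (Nn v) * v)"
          proof (rule sum.cong[OF refl])
            fix v assume v: "v \<in> F"
            have "c v * fps_to_fls D = fps_to_fls (nf v) / fps_to_fls (df v) * (fps_to_fls (df v) * (\<Prod>w\<in>F-{v}. fps_to_fls (df w)))"
              using nd(4)[OF v] fD prod.remove[OF F(1) v, of "\<lambda>w. fps_to_fls (df w)"] by simp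
            also have "\<dots> = fps_to_fls (nf v) * (\<Prod>w\<in>F-{v}. fps_to_fls (df w))"
              using nd(3)[OF v] by simp
            also have "\<dots> = fps_to_fls (Nn v)" by (simp add: Nn_def fls_times_fps_to_fls fps_to_fls_prod)
            finally show "c v * fps_to_fls D * v = fps_to_fls (Nn v) * v" by simp
          qed
          finally show ?thesis .
        qed
        obtain j1 where j1: "\<forall>v\<in>F. Nn v \<in> Rs ?P j1" using Rall_common[OF F(1), of Nn] NR by blast
        obtain j2 where j2: "D \<in> Rs ?P j2" using DR by (auto simp: Rall_def)
        define j where "j = max j1 j2"
        define S where "S = sorted_list_of_set (h ` F)"
        have setS: "set S = h ` F" using F(1) by (simp add: S_def)
        have injF: "inj_on h F" using injh F(2) by (rule inj_on_subset)
        have "(\<Sum>i\<in>set S. fps_to_fls (Nn (bb i)) * bb i) = (\<Sum>v\<in>F. fps_to_fls (Nn (bb (h v))) * bb (h v))"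
          unfolding setS by (rule sum.reindex[OF injF, unfolded comp_def])
        also have "\<dots> = (\<Sum>v\<in>F. fps_to_fls (Nn v) * v)"
          using F(2) bbh by (intro sum.cong) auto
        finally have sum_eq: "(\<Sum>i\<in>set S. fps_to_fls (Nn (bb i)) * bb i) = (\<Sum>v\<in>F. fps_to_fls (Nn v) * v)" .
        have DRj: "D \<in> Rs ?P j" using j2 Rs_mono[of j2 j ?P] by (auto simp: j_def)
        have NRj: "\<forall>i\<in>set S. Nn (bb i) \<in> Rs ?P j"
        proof
          fix i assume "i \<in> set S"
          then obtain v where v: "v \<in> F" "i = h v" using setS by blast
          then have "bb i = v" using bbh F(2) by blast
          then show "Nn (bb i) \<in> Rs ?P j" using j1 v Rs_mono[of j1 j ?P] by (auto simp: j_def)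
        qed
        have "g0 \<in> Acl bb (j, subdegree D, S)"
          unfolding Acl_def using DRj Dne NRj key_eq sum_eq
          by (auto intro!: exI[of _ D] exI[of _ "\<lambda>i. Nn (bb i)"])
        then have "g0 \<in> A (to_nat (j, subdegree D, S))" by (simp add: A_def)
        with g0 show False by blast
      qed
    qed
  qed
qed


end
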